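(* Let $G$ be a finite simple graph, let $k\ge 0$, and let $P$ be a $(3k+2)$-string based at a vertex $v$ of $G$. Let $w$ be the vertex of $P$ adjacent to $v$, and set $U=N_G(v)\setminus\{w\}$. Then the inclusion $I(G\setminus U)\hookrightarrow I(G)$ is a homotopy equivalence.
   Context: For a finite simple graph $G$, $I(G)$ is the independence complex (simplicial complex on $V(G)$ whose simplices are the independent sets). For $S\subseteq V(G)$, $G\setminus S$ is the induced subgraph on $V(G)\setminus S$. $N_G(v)$ is the set of neighbours of $v$. An $n$-string based at $v$ in $G$ is an induced subgraph $P$ of $G$ such that $P$ is isomorphic to the path graph with $n$ vertices, $v$ is an endpoint of $P$, and every vertex of $P$ other than $v$ is adjacent to no vertex of $V(G)\setminus V(P)$. *)

theory Defs
  imports "HOL-Analysis.Analysis"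
begin

definition simple_graph :: "'a set \<Rightarrow> ('a \<Rightarrow> 'a \<Rightarrow> bool) \<Rightarrow> bool" where
  "simple_graph V E \<longleftrightarrow> finite V \<and> (\<forall>x y. E x y \<longrightarrow> E y x)
     \<and> (\<forall>x. \<not> E x x) \<and> (\<forall>x y. E x y \<longrightarrow> x \<in> V \<and> y \<in> V)"

definition nbhd :: "'a set \<Rightarrow> ('a \<Rightarrow> 'a \<Rightarrow> bool) \<Rightarrow> 'a \<Rightarrow> 'a set" where
  "nbhd V E v = {u \<in> V. E v u}"

definition indep_complex :: "'a set \<Rightarrow> ('a \<Rightarrow> 'a \<Rightarrow> bool) \<Rightarrow> 'a set set" where
  "indep_complex W E = {S. S \<subseteq> W \<and> (\<forall>x\<in>S. \<forall>y\<in>S. \<not> E x y)}"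

text \<open>Geometric realization of a simplicial complex K (a downward closed
  family of finite vertex sets): the points are the barycentric coordinate
  functions whose support is a face of K, with the subspace topology of
  the product topology on functions to the reals.\<close>
definition realization :: "'a set set \<Rightarrow> ('a \<Rightarrow> real) topology" where
  "realization K = subtopology (powertop_real UNIV)
     {f. (\<forall>x. 0 \<le> f x) \<and> finite {x. f x \<noteq> 0} \<and> {x. f x \<noteq> 0} \<in> K
         \<and> sum f {x. f x \<noteq> 0} = 1}"

definition homotopy_equivalence_map ::
  "'a topology \<Rightarrow> 'b topology \<Rightarrow> ('a \<Rightarrow> 'b) \<Rightarrow> bool" where
  "homotopy_equivalence_map X Y f \<longleftrightarrow> continuous_map X Y f \<and>
     (\<exists>g. continuous_map Y X g \<and>
          homotopic_with (\<lambda>x. True) X X (g \<circ> f) id \<and>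
          homotopic_with (\<lambda>x. True) Y Y (f \<circ> g) id)"

text \<open>An n-string based at v, given as the list ps = [p_0,...,p_{n-1}] of its
  vertices in path order, p_0 = v: distinct vertices of G, the induced
  subgraph is exactly the path p_0 - p_1 - ... - p_{n-1}, and every p_i with
  i \<ge> 1 has all its neighbours inside the string.\<close>
definition is_string :: "'a set \<Rightarrow> ('a \<Rightarrow> 'a \<Rightarrow> bool) \<Rightarrow> nat \<Rightarrow> 'a \<Rightarrow> 'a list \<Rightarrow> bool" where
  "is_string V E n v ps \<longleftrightarrow> length ps = n \<and> n \<ge> 1 \<and> distinct ps \<and> set ps \<subseteq> V
     \<and> ps ! 0 = v
     \<and> (\<forall>i<n. \<forall>j<n. E (ps ! i) (ps ! j) \<longleftrightarrow> (i = j + 1 \<or> j = i + 1))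
     \<and> (\<forall>i. 1 \<le> i \<and> i < n \<longrightarrow> (\<forall>u\<in>V. E (ps ! i) u \<longrightarrow> u \<in> set ps))"

end

theory Submission
  imports Defs
begin

definition pts :: "'a set set \<Rightarrow> ('a \<Rightarrow> real) set" where
  "pts K = {f. (\<forall>x. 0 \<le> f x) \<and> finite {x. f x \<noteq> 0} \<and> {x. f x \<noteq> 0} \<in> K
         \<and> sum f {x. f x \<noteq> 0} = 1}"

lemma realization_pts: "realization K = subtopology (powertop_real UNIV) (pts K)"
  unfolding realization_def pts_def by simp

lemma topspace_realization [simp]: "topspace (realization K) = pts K"
  unfolding realization_pts by (simp add: topspace_product_topology)

lemma cont_into_realization:
  "continuous_map X (realization K) g \<longleftrightarrow>
     (\<forall>z. continuous_map X euclideanreal (\<lambda>a. g a z)) \<and> g \<in> topspace X \<rightarrow> pts K"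
  unfolding realization_pts continuous_map_in_subtopology continuous_map_componentwise_UNIV
  by simp

lemma cont_coord: "continuous_map (realization K) euclideanreal (\<lambda>f. f z)"
  unfolding realization_pts
  by (rule continuous_map_from_subtopology) (use continuous_map_product_projection[of z UNIV "\<lambda>_. euclideanreal"] in simp)

lemma pts_D:
  assumes "f \<in> pts (indep_complex W E)" "finite W"
  shows "\<forall>z. 0 \<le> f z" "{z. f z \<noteq> 0} \<in> indep_complex W E" "sum f W = 1"
    "\<And>z. z \<notin> W \<Longrightarrow> f z = 0"
proof -
  show "\<forall>z. 0 \<le> f z" "{z. f z \<noteq> 0} \<in> indep_complex W E" using assms by (auto simp: pts_def)
  then have sub: "{z. f z \<noteq> 0} \<subseteq> W" by (auto simp: indep_complex_def)
  then show "\<And>z. z \<notin> W \<Longrightarrow> f z = 0" by auto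
  have "sum f W = sum f {z. f z \<noteq> 0}"
    by (rule sum.mono_neutral_right[OF assms(2) sub]) auto
  then show "sum f W = 1" using assms by (auto simp: pts_def)
qed

lemma pts_I:
  assumes "finite W" "\<forall>z. 0 \<le> g z" "{z. g z \<noteq> 0} \<subseteq> S" "S \<in> indep_complex W E" "sum g W = 1"
  shows "g \<in> pts (indep_complex W E)"
proof -
  have SW: "S \<subseteq> W" using assms(4) by (auto simp: indep_complex_def)
  have sub: "{z. g z \<noteq> 0} \<subseteq> W" using assms(3) SW by auto
  have fin: "finite {z. g z \<noteq> 0}" using finite_subset[OF sub assms(1)] .
  have ind: "{z. g z \<noteq> 0} \<in> indep_complex W E"
    using assms(3,4) sub unfolding indep_complex_def by blast
  have "sum g W = sum g {z. g z \<noteq> 0}"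
    by (rule sum.mono_neutral_right[OF assms(1) sub]) auto
  then show ?thesis using assms fin ind by (auto simp: pts_def)
qed

lemma straight_line:
  assumes W: "finite W"
    and p: "continuous_map X (realization (indep_complex W E)) p"
    and q: "continuous_map X (realization (indep_complex W E)) q"
    and pq: "\<And>a. a \<in> topspace X \<Longrightarrow> {z. p a z \<noteq> 0} \<union> {z. q a z \<noteq> 0} \<in> indep_complex W E"
  shows "homotopic_with (\<lambda>_. True) X (realization (indep_complex W E)) p q"
  unfolding homotopic_with_def
proof (intro exI conjI)
  let ?H = "\<lambda>(t::real, a). (\<lambda>z. (1 - t) * p a z + t * q a z)"
  have pc: "\<And>z. continuous_map X euclideanreal (\<lambda>a. p a z)"
   and qc: "\<And>z. continuous_map X euclideanreal (\<lambda>a. q a z)"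
   and pp: "p \<in> topspace X \<rightarrow> pts (indep_complex W E)"
   and qp: "q \<in> topspace X \<rightarrow> pts (indep_complex W E)"
    using p q by (auto simp: cont_into_realization)
  have fstc: "continuous_map (prod_topology (top_of_set {0..1}) X) euclideanreal fst"
    by (metis continuous_map_fst continuous_map_in_subtopology)
  show "continuous_map (prod_topology (top_of_set {0..1}) X) (realization (indep_complex W E)) ?H"
    unfolding cont_into_realization
  proof (intro conjI allI)
    fix z
    have a: "continuous_map (prod_topology (top_of_set {0..1}) X) euclideanreal (\<lambda>x. p (snd x) z)"
      using continuous_map_compose[OF continuous_map_snd pc[of z]] by (simp add: o_def)
    have b: "continuous_map (prod_topology (top_of_set {0..1}) X) euclideanreal (\<lambda>x. q (snd x) z)"
      using continuous_map_compose[OF continuous_map_snd qc[of z]] by (simp add: o_def)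
    have "continuous_map (prod_topology (top_of_set {0..1}) X) euclideanreal
       (\<lambda>x. (1 - fst x) * p (snd x) z + fst x * q (snd x) z)"
      by (intro continuous_intros fstc a b)
    then show "continuous_map (prod_topology (top_of_set {0..1}) X) euclideanreal (\<lambda>a. ?H a z)"
      by (simp add: case_prod_beta)
  next
    show "?H \<in> topspace (prod_topology (top_of_set {0..1}) X) \<rightarrow> pts (indep_complex W E)"
    proof
      fix ta assume "ta \<in> topspace (prod_topology (top_of_set {0..1::real}) X)"
      then obtain t a where ta: "ta = (t, a)" "t \<in> {0..1}" "a \<in> topspace X" by auto
      have P: "p a \<in> pts (indep_complex W E)" and Q: "q a \<in> pts (indep_complex W E)"
        using pp qp ta by auto
      note PD = pts_D[OF P W] and QD = pts_D[OF Q W]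
      have "(\<lambda>z. (1 - t) * p a z + t * q a z) \<in> pts (indep_complex W E)"
      proof (rule pts_I[OF W _ _ pq[OF ta(3)]])
        show "\<forall>z. 0 \<le> (1 - t) * p a z + t * q a z" using PD(1) QD(1) ta(2) by auto
        show "{z. (1 - t) * p a z + t * q a z \<noteq> 0} \<subseteq> {z. p a z \<noteq> 0} \<union> {z. q a z \<noteq> 0}" by auto
        have "(\<Sum>z\<in>W. (1 - t) * p a z + t * q a z) = (1 - t) * sum (p a) W + t * sum (q a) W"
          by (simp add: sum.distrib sum_distrib_left)
        then show "(\<Sum>z\<in>W. (1 - t) * p a z + t * q a z) = 1" using PD(3) QD(3) by simp
      qed
      then show "?H ta \<in> pts (indep_complex W E)" using ta by simp
    qed
  qed
qed auto


lemma hem_refl: "homotopy_equivalence_map X X id"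
  unfolding homotopy_equivalence_map_def
  by (intro conjI exI[of _ id]) auto

lemma hem_comp:
  assumes "homotopy_equivalence_map X Y f" "homotopy_equivalence_map Y Z g"
  shows "homotopy_equivalence_map X Z (g \<circ> f)"
proof -
  obtain f' where f: "continuous_map X Y f" "continuous_map Y X f'"
    "homotopic_with (\<lambda>x. True) X X (f' \<circ> f) id" "homotopic_with (\<lambda>x. True) Y Y (f \<circ> f') id"
    using assms(1) unfolding homotopy_equivalence_map_def by blast
  obtain g' where g: "continuous_map Y Z g" "continuous_map Z Y g'"
    "homotopic_with (\<lambda>x. True) Y Y (g' \<circ> g) id" "homotopic_with (\<lambda>x. True) Z Z (g \<circ> g') id"
    using assms(2) unfolding homotopy_equivalence_map_def by blast
  have c1: "continuous_map X Z (g \<circ> f)" by (rule continuous_map_compose[OF f(1) g(1)])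
  have c2: "continuous_map Z X (f' \<circ> g')" by (rule continuous_map_compose[OF g(2) f(2)])
  have "homotopic_with (\<lambda>x. True) X X (f' \<circ> (g' \<circ> g) \<circ> f) (f' \<circ> id \<circ> f)"
    by (rule homotopic_with_compose_continuous_map_right[OF homotopic_with_compose_continuous_map_left[OF g(3) f(2)] f(1)]) auto
  then have "homotopic_with (\<lambda>x. True) X X ((f' \<circ> g') \<circ> (g \<circ> f)) (f' \<circ> f)"
    by (simp add: o_assoc)
  then have h1: "homotopic_with (\<lambda>x. True) X X ((f' \<circ> g') \<circ> (g \<circ> f)) id"
    by (rule homotopic_with_trans[OF _ f(3)])
  have "homotopic_with (\<lambda>x. True) Z Z (g \<circ> (f \<circ> f') \<circ> g') (g \<circ> id \<circ> g')"
    by (rule homotopic_with_compose_continuous_map_right[OF homotopic_with_compose_continuous_map_left[OF f(4) g(1)] g(2)]) auto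
  then have "homotopic_with (\<lambda>x. True) Z Z ((g \<circ> f) \<circ> (f' \<circ> g')) (g \<circ> g')"
    by (simp add: o_assoc)
  then have h2: "homotopic_with (\<lambda>x. True) Z Z ((g \<circ> f) \<circ> (f' \<circ> g')) id"
    by (rule homotopic_with_trans[OF _ g(4)])
  show ?thesis unfolding homotopy_equivalence_map_def using c1 c2 h1 h2 by blast
qed

lemma hem_2of3:
  assumes "homotopy_equivalence_map X Y f" "homotopy_equivalence_map X Z (g \<circ> f)"
    "continuous_map Y Z g"
  shows "homotopy_equivalence_map Y Z g"
proof -
  obtain f' where f: "continuous_map X Y f" "continuous_map Y X f'"
    "homotopic_with (\<lambda>x. True) X X (f' \<circ> f) id" "homotopic_with (\<lambda>x. True) Y Y (f \<circ> f') id"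
    using assms(1) unfolding homotopy_equivalence_map_def by blast
  obtain h' where h: "continuous_map Z X h'"
    "homotopic_with (\<lambda>x. True) X X (h' \<circ> (g \<circ> f)) id" "homotopic_with (\<lambda>x. True) Z Z ((g \<circ> f) \<circ> h') id"
    using assms(2) unfolding homotopy_equivalence_map_def by blast
  have c2: "continuous_map Z Y (f \<circ> h')" by (rule continuous_map_compose[OF h(1) f(1)])
  have h2: "homotopic_with (\<lambda>x. True) Z Z (g \<circ> (f \<circ> h')) id"
    using h(3) by (simp add: o_assoc)
  have ch: "continuous_map Y Y (f \<circ> h' \<circ> g)"
    by (rule continuous_map_compose[OF assms(3) c2])
  have s1: "homotopic_with (\<lambda>x. True) Y Y ((f \<circ> h' \<circ> g) \<circ> id) ((f \<circ> h' \<circ> g) \<circ> (f \<circ> f'))"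
    by (rule homotopic_with_compose_continuous_map_left[OF _ ch])
       (use f(4) homotopic_with_symD in auto)
  have s2: "homotopic_with (\<lambda>x. True) Y Y (f \<circ> (h' \<circ> (g \<circ> f)) \<circ> f') (f \<circ> id \<circ> f')"
    by (rule homotopic_with_compose_continuous_map_right[OF homotopic_with_compose_continuous_map_left[OF h(2) f(1)] f(2)]) auto
  have s1': "homotopic_with (\<lambda>x. True) Y Y (f \<circ> h' \<circ> g) (f \<circ> h' \<circ> g \<circ> f \<circ> f')"
    using s1 by (simp add: o_assoc)
  have s2': "homotopic_with (\<lambda>x. True) Y Y (f \<circ> h' \<circ> g \<circ> f \<circ> f') (f \<circ> f')"
    using s2 by (simp add: o_assoc)
  have "homotopic_with (\<lambda>x. True) Y Y ((f \<circ> h') \<circ> g) (f \<circ> f')"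
    by (rule homotopic_with_trans[OF s1' s2'])
  then have h1: "homotopic_with (\<lambda>x. True) Y Y ((f \<circ> h') \<circ> g) id"
    by (rule homotopic_with_trans[OF _ f(4)])
  show ?thesis unfolding homotopy_equivalence_map_def using assms(3) c2 h1 h2 by blast
qed


lemma indep_mono: "A \<subseteq> B \<Longrightarrow> indep_complex A E \<subseteq> indep_complex B E"
  unfolding indep_complex_def by blast

lemma pts_mono: "K \<subseteq> L \<Longrightarrow> pts K \<subseteq> pts L"
  unfolding pts_def by blast

lemma incl_cont: "A \<subseteq> B \<Longrightarrow>
  continuous_map (realization (indep_complex A E)) (realization (indep_complex B E)) id"
  unfolding cont_into_realization using cont_coord pts_mono[OF indep_mono, of A B E] by auto

lemma fold_lemma:
  assumes W: "finite W" and sym: "\<forall>a b. E a b \<longrightarrow> E b a" and irr: "\<forall>a. \<not> E a a"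
    and x: "x \<in> W" "x \<notin> Y" and Y: "Y \<subseteq> W"
    and dom: "\<forall>y\<in>Y. \<forall>z\<in>W. E x z \<longrightarrow> E y z"
  shows "homotopy_equivalence_map (realization (indep_complex (W - Y) E))
           (realization (indep_complex W E)) id"
proof -
  let ?K = "indep_complex W E" and ?L = "indep_complex (W - Y) E"
  define \<Phi> where "\<Phi> f = (\<lambda>z. if z \<in> Y then 0 else if z = x then f x + sum f Y else f z)"
    for f :: "'a \<Rightarrow> real"
  have finY: "finite Y" using finite_subset[OF Y W] .
  have finWY: "finite (W - Y)" using W by auto
  have key: "\<Phi> f \<in> pts ?L \<and> {z. f z \<noteq> 0} \<union> {z. \<Phi> f z \<noteq> 0} \<in> ?K" if f: "f \<in> pts ?K" for f
  proof -
    note fD = pts_D[OF f W]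
    have nn: "\<forall>z. 0 \<le> \<Phi> f z"
      using fD(1) by (auto simp: \<Phi>_def intro!: add_nonneg_nonneg sum_nonneg)
    show ?thesis
    proof (cases "\<forall>y\<in>Y. f y = 0")
      case True
      have eq: "\<Phi> f = f" using True by (auto simp: \<Phi>_def)
      have suppsub: "{z. f z \<noteq> 0} \<subseteq> W - Y" using True fD(2) by (auto simp: indep_complex_def)
      have "{z. f z \<noteq> 0} \<in> ?L" using fD(2) suppsub by (auto simp: indep_complex_def)
      moreover have "sum f (W - Y) = 1"
      proof -
        have "sum f W = sum f (W - Y) + sum f Y" by (rule sum.subset_diff[OF Y W])
        then show ?thesis using fD(3) True by simp
      qed
      ultimately have "f \<in> pts ?L" using pts_I[OF finWY fD(1) order_refl] by blast
      then show ?thesis using eq fD(2) by simp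
    next
      case False
      then obtain y where y: "y \<in> Y" "f y \<noteq> 0" by blast
      let ?S = "{z. f z \<noteq> 0} \<union> {x}"
      have SK: "?S \<in> ?K"
        unfolding indep_complex_def
      proof (intro CollectI conjI ballI)
        show "?S \<subseteq> W" using fD(2) x by (auto simp: indep_complex_def)
        have ind: "\<forall>a\<in>{z. f z \<noteq> 0}. \<forall>b\<in>{z. f z \<noteq> 0}. \<not> E a b" and sub: "{z. f z \<noteq> 0} \<subseteq> W"
          using fD(2) by (auto simp: indep_complex_def)
        have nx: "\<not> E x b" if "f b \<noteq> 0" for b
        proof
          assume "E x b"
          then have "E y b" using dom y(1) sub that by blast
          then show False using ind y(2) that by blast
        qed
        fix a b assume "a \<in> ?S" "b \<in> ?S"
        then show "\<not> E a b" using ind nx irr sym by blast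
      qed
      have SL: "?S - Y \<in> ?L" using SK unfolding indep_complex_def by blast
      have supp: "{z. \<Phi> f z \<noteq> 0} \<subseteq> ?S - Y" by (auto simp: \<Phi>_def split: if_splits)
      have "sum (\<Phi> f) (W - Y) = sum (\<lambda>z. f z + (if z = x then sum f Y else 0)) (W - Y)"
        by (rule sum.cong) (auto simp: \<Phi>_def)
      also have "\<dots> = sum f (W - Y) + sum f Y"
        using x finWY by (simp add: sum.distrib)
      also have "\<dots> = sum f W" by (rule sum.subset_diff[OF Y W, symmetric])
      finally have "sum (\<Phi> f) (W - Y) = 1" using fD(3) by simp
      then have "\<Phi> f \<in> pts ?L" using pts_I[OF finWY nn supp SL] by blast
      moreover have "{z. f z \<noteq> 0} \<union> {z. \<Phi> f z \<noteq> 0} \<in> ?K"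
        using SK supp unfolding indep_complex_def by blast
      ultimately show ?thesis by blast
    qed
  qed
  have contPhi: "continuous_map (realization ?K) (realization ?L) \<Phi>"
    unfolding cont_into_realization
  proof (intro conjI allI)
    fix z
    show "continuous_map (realization ?K) euclideanreal (\<lambda>a. \<Phi> a z)"
    proof (cases "z \<in> Y")
      case True then show ?thesis by (simp add: \<Phi>_def)
    next
      case False
      show ?thesis
      proof (cases "z = x")
        case True
        have "continuous_map (realization ?K) euclideanreal (\<lambda>f. f x + sum f Y)"
          by (intro continuous_map_add continuous_map_sum finY cont_coord)
        then show ?thesis using False True by (simp add: \<Phi>_def)
      next
        case False2: False
        then show ?thesis using False cont_coord by (simp add: \<Phi>_def)
      qed
    qed
  next
    show "\<Phi> \<in> topspace (realization ?K) \<rightarrow> pts ?L" using key by auto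
  qed
  have contI: "continuous_map (realization ?L) (realization ?K) id"
    by (rule incl_cont) auto
  have h1: "homotopic_with (\<lambda>x. True) (realization ?L) (realization ?L) (\<Phi> \<circ> id) id"
  proof (rule homotopic_with_id2)
    fix f assume "f \<in> topspace (realization ?L)"
    then have f: "f \<in> pts ?L" by simp
    have "\<forall>y\<in>Y. f y = 0" using pts_D(4)[OF f finWY] by blast
    then show "\<Phi> (id f) = f" by (auto simp: \<Phi>_def)
  qed
  have h2: "homotopic_with (\<lambda>x. True) (realization ?K) (realization ?K) (id \<circ> \<Phi>) id"
  proof (rule straight_line[OF W])
    show "continuous_map (realization ?K) (realization ?K) (id \<circ> \<Phi>)"
      by (rule continuous_map_compose[OF contPhi contI])
    show "continuous_map (realization ?K) (realization ?K) id" by simp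
    fix f assume "f \<in> topspace (realization ?K)"
    then have "f \<in> pts ?K" by simp
    then show "{z. (id \<circ> \<Phi>) f z \<noteq> 0} \<union> {z. id f z \<noteq> 0} \<in> ?K"
      using key by (simp add: Un_commute)
  qed
  show ?thesis unfolding homotopy_equivalence_map_def
    using contI contPhi h1 h2 by blast
qed


lemma chain:
  assumes sg: "simple_graph V E" and len: "length p = 3*k+2" and dist: "distinct p"
    and adj: "\<forall>i<3*k+2. \<forall>j<3*k+2. E (p ! i) (p ! j) \<longleftrightarrow> (i = j + 1 \<or> j = i + 1)"
    and closed: "\<forall>i. 1 \<le> i \<and> i < 3*k+2 \<longrightarrow> (\<forall>u\<in>V. E (p ! i) u \<longrightarrow> u \<in> set p)"
    and W: "set p \<subseteq> W" "W \<subseteq> V"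
  shows "d \<le> k \<Longrightarrow> homotopy_equivalence_map
     (realization (indep_complex (W - (\<lambda>j. p ! (3*j+2)) ` {k-d..<k}) E))
     (realization (indep_complex W E)) id"
proof (induction d)
  case 0
  then show ?case using hem_refl[of "realization (indep_complex W E)"] by (simp add: id_def)
next
  case (Suc d)
  define m where "m = k - Suc d"
  have mk: "m < k" "Suc m = k - d" using Suc.prems unfolding m_def by auto
  let ?T = "\<lambda>m. (\<lambda>j. p ! (3*j+2)) ` {m..<k}"
  let ?W' = "W - ?T (Suc m)"
  have finV: "finite V" and sym: "\<forall>a b. E a b \<longrightarrow> E b a" and irr: "\<forall>a. \<not> E a a"
    and EV: "\<forall>a b. E a b \<longrightarrow> a \<in> V \<and> b \<in> V"
    using sg unfolding simple_graph_def by auto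
  have idx: "\<And>i j. i < 3*k+2 \<Longrightarrow> j < 3*k+2 \<Longrightarrow> p ! i = p ! j \<longleftrightarrow> i = j"
    using dist len by (simp add: nth_eq_iff_index_eq)
  have inp: "\<And>i. i < 3*k+2 \<Longrightarrow> p ! i \<in> W" using W len by (metis nth_mem subsetD)
  have fin: "finite ?W'" using finite_subset[OF _ finV] W by blast
  have xW: "p ! (3*m+4) \<in> ?W'"
  proof -
    have "p ! (3*m+4) \<noteq> p ! (3*j+2)" if "j \<in> {Suc m..<k}" for j
      using that mk idx[of "3*m+4" "3*j+2"] by auto
    then have "p ! (3*m+4) \<notin> ?T (Suc m)" by blast
    then show ?thesis using inp[of "3*m+4"] mk by auto
  qed
  have yW: "{p ! (3*m+2)} \<subseteq> ?W'"
  proof -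
    have "p ! (3*m+2) \<noteq> p ! (3*j+2)" if "j \<in> {Suc m..<k}" for j
      using that mk idx[of "3*m+2" "3*j+2"] by auto
    then have "p ! (3*m+2) \<notin> ?T (Suc m)" by blast
    then show ?thesis using inp[of "3*m+2"] mk by auto
  qed
  have xY: "p ! (3*m+4) \<notin> {p ! (3*m+2)}" using idx[of "3*m+4" "3*m+2"] mk by auto
  have dom: "\<forall>y\<in>{p ! (3*m+2)}. \<forall>z\<in>?W'. E (p ! (3*m+4)) z \<longrightarrow> E y z"
  proof (intro ballI impI)
    fix y z assume y: "y \<in> {p ! (3*m+2)}" and z: "z \<in> ?W'" and e: "E (p ! (3*m+4)) z"
    have "z \<in> V" using EV e by blast
    moreover have "1 \<le> 3*m+4 \<and> 3*m+4 < 3*k+2" using mk by auto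
    ultimately have "z \<in> set p" using closed e by blast
    then obtain i where i: "i < 3*k+2" "z = p ! i" using len by (auto simp: in_set_conv_nth)
    have "3*m+4 = i+1 \<or> i = 3*m+4+1" using adj e i \<open>1 \<le> 3*m+4 \<and> 3*m+4 < 3*k+2\<close> by blast
    moreover have "i \<noteq> 3*m+5"
    proof
      assume "i = 3*m+5"
      then have e5: "3*(Suc m)+2 = i" by simp
      have "Suc m < k" using i(1) e5 by simp
      moreover have "z = p ! (3*(Suc m)+2)" using i(2) e5 by metis
      ultimately have "z \<in> ?T (Suc m)" by (intro image_eqI[where x="Suc m"]) auto
      then show False using z by blast
    qed
    ultimately have "i = 3*m+3" by auto
    then show "E y z" using y i adj mk by auto
  qed
  have f: "homotopy_equivalence_map (realization (indep_complex (?W' - {p ! (3*m+2)}) E))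
           (realization (indep_complex ?W' E)) id"
    by (rule fold_lemma[OF fin sym irr xW xY yW dom])
  have eq: "?W' - {p ! (3*m+2)} = W - ?T m"
  proof -
    have "{m..<k} = insert m {Suc m..<k}" using mk by auto
    then show ?thesis by auto
  qed
  have "homotopy_equivalence_map (realization (indep_complex (W - ?T m) E))
           (realization (indep_complex W E)) id"
    using hem_comp[OF f[unfolded eq] Suc.IH[unfolded mk(2)[symmetric]]] Suc.prems unfolding comp_id by simp
  then show ?case unfolding m_def .
qed


theorem proposition2p7:
  fixes V :: "'a set" and E :: "'a \<Rightarrow> 'a \<Rightarrow> bool" and k :: nat
    and v :: 'a and ps :: "'a list"
  assumes "simple_graph V E"
    and "is_string V E (3 * k + 2) v ps"
  shows "homotopy_equivalence_map
           (realization (indep_complex (V - (nbhd V E v - {ps ! 1})) E))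
           (realization (indep_complex V E)) id"
proof -
  note sg = assms(1)
  have len: "length ps = 3*k+2" and dist: "distinct ps" and setp: "set ps \<subseteq> V"
    and p0: "ps ! 0 = v"
    and adj: "\<forall>i<3*k+2. \<forall>j<3*k+2. E (ps ! i) (ps ! j) \<longleftrightarrow> (i = j + 1 \<or> j = i + 1)"
    and closed: "\<forall>i. 1 \<le> i \<and> i < 3*k+2 \<longrightarrow> (\<forall>u\<in>V. E (ps ! i) u \<longrightarrow> u \<in> set ps)"
    using assms(2) unfolding is_string_def by auto
  have finV: "finite V" and sym: "\<forall>a b. E a b \<longrightarrow> E b a" and irr: "\<forall>a. \<not> E a a"
    and EV: "\<forall>a b. E a b \<longrightarrow> a \<in> V \<and> b \<in> V"
    using sg unfolding simple_graph_def by auto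
  have idx: "\<And>i j. i < 3*k+2 \<Longrightarrow> j < 3*k+2 \<Longrightarrow> ps ! i = ps ! j \<longleftrightarrow> i = j"
    using dist len by (simp add: nth_eq_iff_index_eq)
  define U where "U = nbhd V E v - {ps ! 1}"
  define T where "T = (\<lambda>j. ps ! (3*j+2)) ` {0..<k}"
  have UV: "U \<subseteq> V" unfolding U_def nbhd_def by auto
  have Up: "U \<inter> set ps = {}"
  proof (rule ccontr)
    assume "U \<inter> set ps \<noteq> {}"
    then obtain u where u: "u \<in> U" "u \<in> set ps" by blast
    then obtain i where i: "i < 3*k+2" "u = ps ! i" using len by (auto simp: in_set_conv_nth)
    have "E (ps ! 0) (ps ! i)" using u(1) i p0 unfolding U_def nbhd_def by auto
    then have "i = 1" using adj i by auto
    then show False using u(1) i unfolding U_def by auto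
  qed
  have Tp: "T \<subseteq> set ps" unfolding T_def using len by auto
  have A1: "homotopy_equivalence_map (realization (indep_complex ((V - U) - T) E))
            (realization (indep_complex (V - U) E)) id"
    using chain[OF sg len dist adj closed _ _, of "V - U" k] setp Up unfolding T_def by auto
  have A2: "homotopy_equivalence_map (realization (indep_complex (V - T) E))
            (realization (indep_complex V E)) id"
    using chain[OF sg len dist adj closed setp _, of k] unfolding T_def by auto
  have fin: "finite (V - T)" using finV by auto
  have p1T: "ps ! 1 \<notin> T"
  proof
    assume "ps ! 1 \<in> T"
    then obtain j where "j < k" "ps ! 1 = ps ! (3*j+2)" unfolding T_def by auto
    then show False using idx[of 1 "3*j+2"] by auto
  qed
  have xW: "ps ! 1 \<in> V - T" using p1T setp len by auto
  have xY: "ps ! 1 \<notin> U" unfolding U_def by auto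
  have YW: "U \<subseteq> V - T" using UV Up Tp by auto
  have dom: "\<forall>y\<in>U. \<forall>z\<in>V - T. E (ps ! 1) z \<longrightarrow> E y z"
  proof (intro ballI impI)
    fix y z assume y: "y \<in> U" and z: "z \<in> V - T" and e: "E (ps ! 1) z"
    have "z \<in> V" using EV e by blast
    then have "z \<in> set ps" using closed e by auto
    then obtain i where i: "i < 3*k+2" "z = ps ! i" using len by (auto simp: in_set_conv_nth)
    have "1 = i+1 \<or> i = 2" using adj e i by auto
    moreover have "i \<noteq> 2"
    proof
      assume "i = 2"
      then have "0 < k" using i by simp
      then have "z \<in> T" unfolding T_def using i \<open>i = 2\<close> by (intro image_eqI[where x=0]) (auto simp: numeral_2_eq_2)
      then show False using z by blast
    qed
    ultimately have "z = v" using i p0 by auto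
    moreover have "E v y" using y unfolding U_def nbhd_def by auto
    ultimately show "E y z" using sym by blast
  qed
  have A3: "homotopy_equivalence_map (realization (indep_complex ((V - T) - U) E))
            (realization (indep_complex (V - T) E)) id"
    by (rule fold_lemma[OF fin sym irr xW xY YW dom])
  have eqs: "(V - T) - U = (V - U) - T" by auto
  have A4: "homotopy_equivalence_map (realization (indep_complex ((V - U) - T) E))
            (realization (indep_complex V E)) id"
    using hem_comp[OF A3 A2] unfolding comp_id eqs .
  have "homotopy_equivalence_map (realization (indep_complex (V - U) E))
            (realization (indep_complex V E)) id"
    by (rule hem_2of3[OF A1 _ incl_cont]) (use A4 in auto)
  then show ?thesis unfolding U_def .
qed

end
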